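(* Let $C_3$ be a positive constant. The following are equivalent: (i) For every positive integer $N$, every strictly increasing real sequence $(\lambda_k)_{k=-\infty}^\infty$, with $\delta_k:=\min\{\lambda_k-\lambda_{k-1},\lambda_{k+1}-\lambda_k\}$, and all nonnegative reals $t_1,\dots,t_N$, $$\sum_{m=1}^N\sum_{\substack{n=1\\ n\ne m}}^N\frac{\delta_m^{3/2}\delta_n^{1/2}t_mt_n}{(\lambda_m-\lambda_n)^2}\le C_3\sum_{n=1}^N t_n^2.$$ (ii) For every positive integer $M$, all real numbers $x_1,\dots,x_M$ distinct modulo $1$, and all nonnegative reals $\tau_1,\dots,\tau_M$, $$\frac13\sum_{m=1}^M d_m^2\tau_m^2+\sum_{m=1}^M\sum_{\substack{n=1\\ n\ne m}}^M\frac{d_m^{3/2}d_n^{1/2}\tau_m\tau_n}{\sin^2(\pi(x_m-x_n))}\le\frac{C_3}{\pi^2}\sum_{m=1}^M\tau_m^2,$$ where $d_m:=\min_{n\ne m}\|x_n-x_m\|$ (and $d_1:=1$ if $M=1$).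
   Context: $\|x\|=\min_{k\in\mathbb Z}|x-k|$ denotes the distance from the real number $x$ to a nearest integer. *)

theory Defs
  imports "HOL-Analysis.Analysis"
begin

definition dnint :: "real \<Rightarrow> real" where
  "dnint x = Inf {\<bar>x - of_int k\<bar> | k. True}"

definition gapdelta :: "(int \<Rightarrow> real) \<Rightarrow> int \<Rightarrow> real" where
  "gapdelta lam k = min (lam k - lam (k - 1)) (lam (k + 1) - lam k)"

definition mindist :: "nat \<Rightarrow> (nat \<Rightarrow> real) \<Rightarrow> nat \<Rightarrow> real" where
  "mindist M x m = (if M = 1 then 1
     else Min {dnint (x n - x m) | n. n \<in> {1..M} \<and> n \<noteq> m})"

end

theory Submission
  imports Defs
begin


lemma deriv_zero_of_const:
  fixes f :: "real \<Rightarrow> real"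
  assumes "(f has_field_derivative D) (at u)" "open S" "u \<in> S" "\<And>v. v \<in> S \<Longrightarrow> f v = c"
  shows "D = 0"
proof -
  have "((\<lambda>v. c) has_field_derivative 0) (at u)" by (rule DERIV_const)
  hence "(f has_field_derivative 0) (at u)"
    using assms by (rule_tac has_field_derivative_transform_within_open[where S=S]) auto
  with assms(1) show ?thesis by (rule DERIV_unique)
qed

lemma Gamma_reflection_real:
  fixes u :: real
  shows "Gamma u * Gamma (1 - u) = pi / sin (pi * u)"
proof -
  have "Gamma (complex_of_real u) * Gamma (1 - complex_of_real u) = of_real pi / sin (of_real pi * of_real u)"
    by (rule Gamma_reflection_complex)
  also have "Gamma (1 - complex_of_real u) = of_real (Gamma (1 - u))"
    by (metis Gamma_complex_of_real of_real_1 of_real_diff)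
  also have "sin (of_real pi * of_real u) = complex_of_real (sin (pi * u))"
    by (metis of_real_mult sin_of_real)
  finally show ?thesis
    by (metis Gamma_complex_of_real of_real_divide of_real_eq_iff of_real_mult)
qed

lemma digamma_reflection:
  fixes u :: real
  assumes "0 < u" "u < 1"
  shows "Digamma u - Digamma (1 - u) + pi * cos (pi * u) / sin (pi * u) = 0"
proof -
  have nz: "v \<notin> \<int>\<^sub>\<le>\<^sub>0" if "v > 0" for v :: real
    using that nonpos_Ints_nonpos by fastforce
  have sinpos: "sin (pi * u) > 0" using assms by (intro sin_gt_zero) auto
  have gpos: "Gamma u > 0" "Gamma (1 - u) > 0" using assms by (auto intro: Gamma_real_pos)
  have "((\<lambda>v. Gamma v * Gamma (1 - v) * sin (pi * v)) has_field_derivative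
     (Gamma u * Digamma u * Gamma (1 - u) * sin (pi * u)
      + Gamma u * (Gamma (1 - u) * Digamma (1 - u) * (-1)) * sin (pi * u)
      + Gamma u * Gamma (1 - u) * (cos (pi * u) * pi))) (at u)"
    using assms nz[of u] nz[of "1 - u"]
    by (auto intro!: derivative_eq_intros simp: algebra_simps)
  hence D0: "Gamma u * Digamma u * Gamma (1 - u) * sin (pi * u)
      + Gamma u * (Gamma (1 - u) * Digamma (1 - u) * (-1)) * sin (pi * u)
      + Gamma u * Gamma (1 - u) * (cos (pi * u) * pi) = 0"
  proof (rule deriv_zero_of_const[where S="{0<..<1}" and c=pi])
    fix v :: real assume "v \<in> {0<..<1}"
    hence "sin (pi * v) > 0" by (intro sin_gt_zero) auto
    thus "Gamma v * Gamma (1 - v) * sin (pi * v) = pi" by (simp add: Gamma_reflection_real)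
  qed (use assms in auto)
  have "Gamma u * Gamma (1 - u) * (sin (pi * u) * (Digamma u - Digamma (1 - u)) + pi * cos (pi * u)) = 0"
    using D0 by (simp add: algebra_simps)
  hence "sin (pi * u) * (Digamma u - Digamma (1 - u)) + pi * cos (pi * u) = 0"
    using gpos by simp
  thus ?thesis using sinpos by (simp add: field_simps)
qed

lemma trigamma_reflection:
  fixes u :: real
  assumes "0 < u" "u < 1"
  shows "Polygamma 1 u + Polygamma 1 (1 - u) = pi^2 / (sin (pi * u))^2"
proof -
  have nz: "v \<notin> \<int>\<^sub>\<le>\<^sub>0" if "v > 0" for v :: real
    using that nonpos_Ints_nonpos by fastforce
  have sinpos: "sin (pi * u) > 0" using assms by (intro sin_gt_zero) auto
  have "((\<lambda>v. Digamma v - Digamma (1 - v) + pi * cos (pi * v) / sin (pi * v)) has_field_derivative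
     (Polygamma 1 u - Polygamma 1 (1 - u) * (-1)
      + (pi * (- sin (pi * u) * pi) * sin (pi * u) - pi * cos (pi * u) * (cos (pi * u) * pi)) / (sin (pi * u))^2)) (at u)"
    using assms nz[of u] nz[of "1 - u"] sinpos
    by (auto intro!: derivative_eq_intros simp: power2_eq_square)
  hence D0: "Polygamma 1 u - Polygamma 1 (1 - u) * (-1)
      + (pi * (- sin (pi * u) * pi) * sin (pi * u) - pi * cos (pi * u) * (cos (pi * u) * pi)) / (sin (pi * u))^2 = 0"
  proof (rule deriv_zero_of_const[where S="{0<..<1}" and c=0])
    fix v :: real assume "v \<in> {0<..<1}"
    thus "Digamma v - Digamma (1 - v) + pi * cos (pi * v) / sin (pi * v) = 0"
      by (intro digamma_reflection) auto
  qed (use assms in auto)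
  have "(pi * (- sin (pi * u) * pi) * sin (pi * u) - pi * cos (pi * u) * (cos (pi * u) * pi))
        = -(pi^2) * ((sin (pi * u))^2 + (cos (pi * u))^2)"
    by (simp add: power2_eq_square algebra_simps del: sin_cos_squared_add sin_cos_squared_add2 sin_cos_squared_add3 cos_squared_eq sin_squared_eq)
  also have "\<dots> = -(pi^2)" by (simp only: sin_cos_squared_add mult_1_right)
  finally show ?thesis using D0 by simp
qed



definition PJ :: "nat \<Rightarrow> real \<Rightarrow> real" where
  "PJ J u = (\<Sum>j\<in>{-int J..int J}. 1 / (u + of_int j)^2)"

definition Lval :: "real \<Rightarrow> real" where
  "Lval u = (if u = 0 then pi^2 / 3 else pi^2 / (sin (pi * u))^2)"

lemma PJ_0: "PJ 0 u = 1 / u^2"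
  by (simp add: PJ_def)

lemma PJ_Suc: "PJ (Suc J) u = PJ J u + 1 / (u + real (Suc J))^2 + 1 / (u - real (Suc J))^2"
proof -
  have "{-int (Suc J)..int (Suc J)} = insert (int (Suc J)) (insert (- int (Suc J)) {-int J..int J})"
    by auto
  thus ?thesis unfolding PJ_def by (simp add: algebra_simps)
qed

lemma PJ_split: "PJ J u = (\<Sum>k<Suc J. 1 / (u + real k)^2) + (\<Sum>k<J. 1 / ((1 - u) + real k)^2)"
proof (induction J)
  case 0 thus ?case by (simp add: PJ_0)
next
  case (Suc J)
  have e: "(u - real (Suc J))^2 = ((1 - u) + real J)^2" by (simp add: power2_eq_square algebra_simps)
  show ?case unfolding PJ_Suc Suc e by simp
qed

lemma PJ_neg: "PJ J (- u) = PJ J u"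
proof (induction J)
  case 0 thus ?case by (simp add: PJ_0)
next
  case (Suc J)
  have e1: "(- u + real (Suc J))^2 = (u - real (Suc J))^2" by (simp add: power2_eq_square algebra_simps)
  have e2: "(- u - real (Suc J))^2 = (u + real (Suc J))^2" by (simp add: power2_eq_square algebra_simps)
  show ?case unfolding PJ_Suc Suc e1 e2 by simp
qed

lemma PJ_zero: "PJ J 0 = 2 * (\<Sum>k<J. 1 / real ((k + 1)^2))"
proof (induction J)
  case 0 thus ?case by (simp add: PJ_0)
next
  case (Suc J)
  have a: "1 / (0 + real (Suc J))^2 = 1 / real ((J + 1)^2)" by simp
  have b: "1 / (0 - real (Suc J))^2 = 1 / real ((J + 1)^2)" by (simp add: power2_eq_square algebra_simps)
  show ?case unfolding PJ_Suc Suc a b by simp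
qed

lemma PJ_lim_pos:
  assumes "0 < u" "u < 1"
  shows "(\<lambda>J. PJ J u) \<longlonglongrightarrow> pi^2 / (sin (pi * u))^2"
proof -
  have s1: "(\<lambda>k. inverse ((u + of_nat k)^Suc 1)) sums ((-1)^Suc 1 * Polygamma 1 u / fact 1)"
    using assms by (intro Polygamma_LIMSEQ) auto
  have s2: "(\<lambda>k. inverse (((1 - u) + of_nat k)^Suc 1)) sums ((-1)^Suc 1 * Polygamma 1 (1 - u) / fact 1)"
    using assms by (intro Polygamma_LIMSEQ) auto
  have l1: "(\<lambda>n. \<Sum>k<n. 1 / (u + real k)^2) \<longlonglongrightarrow> Polygamma 1 u"
    using s1 by (simp add: sums_def inverse_eq_divide power2_eq_square)
  have l2: "(\<lambda>n. \<Sum>k<n. 1 / ((1 - u) + real k)^2) \<longlonglongrightarrow> Polygamma 1 (1 - u)"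
    using s2 by (simp add: sums_def inverse_eq_divide power2_eq_square)
  have "(\<lambda>J. (\<Sum>k<Suc J. 1 / (u + real k)^2) + (\<Sum>k<J. 1 / ((1 - u) + real k)^2))
        \<longlonglongrightarrow> Polygamma 1 u + Polygamma 1 (1 - u)"
    using LIMSEQ_Suc[OF l1] l2 by (intro tendsto_add)
  thus ?thesis using trigamma_reflection[OF assms] by (simp add: PJ_split)
qed

lemma PJ_lim:
  assumes "\<bar>u\<bar> < 1"
  shows "(\<lambda>J. PJ J u) \<longlonglongrightarrow> Lval u"
proof (cases "u = 0")
  case True
  have "(\<lambda>n. \<Sum>k<n. 1 / real ((k + 1)^2)) \<longlonglongrightarrow> pi^2 / 6"
    using inverse_squares_sums by (simp add: sums_def)
  hence "(\<lambda>J. 2 * (\<Sum>k<J. 1 / real ((k + 1)^2))) \<longlonglongrightarrow> 2 * (pi^2 / 6)"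
    by (intro tendsto_mult tendsto_const)
  thus ?thesis using True by (simp add: PJ_zero Lval_def)
next
  case False
  show ?thesis
  proof (cases "u > 0")
    case True
    thus ?thesis using PJ_lim_pos[of u] assms False by (simp add: Lval_def)
  next
    case F: False
    hence "0 < - u" "- u < 1" using False assms by auto
    from PJ_lim_pos[OF this] show ?thesis using False
      by (simp add: Lval_def PJ_neg)
  qed
qed

lemma double_sum_lb:
  fixes g :: "int \<Rightarrow> real"
  assumes g: "\<And>j. g j \<ge> 0" and JK: "2 * J \<le> K"
  shows "real (K - 2 * J) * (\<Sum>j\<in>{-int J..int J}. g j) \<le> (\<Sum>q<K. \<Sum>q'<K. g (int q - int q'))"
proof -
  have inner: "(\<Sum>j\<in>{-int J..int J}. g j) \<le> (\<Sum>q<K. g (int q - int q'))"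
    if q': "q' \<in> {J..<K - J}" for q'
  proof -
    have "(\<Sum>j\<in>{-int J..int J}. g j) = (\<Sum>q\<in>{q' - J..q' + J}. g (int q - int q'))"
    proof (rule sum.reindex_bij_witness[where i = "\<lambda>q. int q - int q'" and j = "\<lambda>j. nat (int q' + j)"])
    qed (use q' in auto)
    also have "\<dots> \<le> (\<Sum>q<K. g (int q - int q'))"
      by (rule sum_mono2) (use q' JK g in auto)
    finally show ?thesis .
  qed
  have "real (K - 2 * J) * (\<Sum>j\<in>{-int J..int J}. g j) = (\<Sum>q'\<in>{J..<K - J}. (\<Sum>j\<in>{-int J..int J}. g j))"
    using JK by simp
  also have "\<dots> \<le> (\<Sum>q'\<in>{J..<K - J}. \<Sum>q<K. g (int q - int q'))"
    by (rule sum_mono) (rule inner)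
  also have "\<dots> \<le> (\<Sum>q'<K. \<Sum>q<K. g (int q - int q'))"
    by (rule sum_mono2) (auto intro: sum_nonneg g)
  also have "\<dots> = (\<Sum>q<K. \<Sum>q'<K. g (int q - int q'))"
    by (rule sum.swap)
  finally show ?thesis .
qed

lemma reidx:
  fixes h :: "int \<Rightarrow> 'a::comm_monoid_add"
  shows "(\<Sum>i\<in>{1..int (K * M)}. h i) = (\<Sum>q<K. \<Sum>r<M. h (int (q * M + r) + 1))"
proof -
  have "(\<Sum>i\<in>{1..int (K * M)}. h i) = (\<Sum>n<K * M. h (int n + 1))"
    by (rule sum.reindex_bij_witness[where i = "\<lambda>n. int n + 1" and j = "\<lambda>i. nat (i - 1)"]) (auto simp flip: of_nat_mult simp: nat_less_iff)
  also have "\<dots> = (\<Sum>q<K. \<Sum>n\<in>{q * M..<q * M + M}. h (int n + 1))"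
    by (rule sum.nat_group[symmetric])
  also have "\<dots> = (\<Sum>q<K. \<Sum>r<M. h (int (q * M + r) + 1))"
  proof (rule sum.cong[OF refl])
    fix q
    show "(\<Sum>n\<in>{q * M..<q * M + M}. h (int n + 1)) = (\<Sum>r<M. h (int (q * M + r) + 1))"
      by (rule sum.reindex_bij_witness[where i = "\<lambda>r. q * M + r" and j = "\<lambda>n. n - q * M"]) auto
  qed
  finally show ?thesis .
qed



lemma gap_pos: "strict_mono lam \<Longrightarrow> gapdelta lam i > 0"
  unfolding gapdelta_def by (auto simp: strict_mono_less)

lemma gap_le:
  assumes "strict_mono (lam :: int \<Rightarrow> real)" "i \<noteq> j"
  shows "gapdelta lam i \<le> \<bar>lam j - lam i\<bar>"
proof (cases "i < j")
  case True
  hence "lam (i + 1) \<le> lam j" using assms(1) by (simp add: strict_mono_less_eq)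
  moreover have "lam i < lam j" using True assms(1) by (simp add: strict_mono_less)
  ultimately show ?thesis unfolding gapdelta_def by auto
next
  case False
  hence "j < i" using assms(2) by simp
  hence "lam j \<le> lam (i - 1)" using assms(1) by (simp add: strict_mono_less_eq)
  moreover have "lam j < lam i" using \<open>j < i\<close> assms(1) by (simp add: strict_mono_less)
  ultimately show ?thesis unfolding gapdelta_def by auto
qed

lemma dnint_le: "dnint y \<le> \<bar>y - of_int k\<bar>"
  unfolding dnint_def by (rule cInf_lower) (auto intro: bdd_belowI[where m=0])

lemma dnint_nonneg: "dnint y \<ge> 0"
  unfolding dnint_def by (rule cInf_greatest) auto

lemma dnint_le1: "dnint y \<le> 1"
proof -
  have "dnint y \<le> \<bar>y - of_int \<lfloor>y\<rfloor>\<bar>" by (rule dnint_le)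
  also have "\<dots> \<le> 1" by linarith
  finally show ?thesis .
qed

lemma dnint_small:
  assumes "\<bar>y\<bar> \<le> 1/2"
  shows "dnint y = \<bar>y\<bar>"
  unfolding dnint_def
proof (rule cInf_eq_minimum)
  show "\<bar>y\<bar> \<in> {\<bar>y - of_int k\<bar> | k. True}" by (rule CollectI, rule exI[of _ 0]) simp
next
  fix z assume "z \<in> {\<bar>y - of_int k\<bar> | k. True}"
  then obtain k where z: "z = \<bar>y - of_int k\<bar>" by auto
  show "\<bar>y\<bar> \<le> z"
  proof (cases "k = 0")
    case False
    hence "\<bar>real_of_int k\<bar> \<ge> 1" by linarith
    thus ?thesis using assms z by linarith
  qed (use z in simp)
qed

lemma int_abs_lt1: "(y::real) \<in> \<int> \<Longrightarrow> \<bar>y\<bar> < 1 \<Longrightarrow> y = 0"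
  by (auto elim!: Ints_cases)

lemma int_sum_conv:
  "(\<Sum>m\<in>{1..int N}. \<Sum>n\<in>{1..int N} - {m}. F m n) = (\<Sum>m\<in>{1..N}. \<Sum>n\<in>{1..N} - {m}. F (int m) (int n))"
proof -
  have "(\<Sum>m\<in>{1..int N}. \<Sum>n\<in>{1..int N} - {m}. F m n) = (\<Sum>m\<in>{1..N}. \<Sum>n\<in>{1..int N} - {int m}. F (int m) n)"
    by (rule sum.reindex_bij_witness[where i = int and j = nat]) auto
  also have "\<dots> = (\<Sum>m\<in>{1..N}. \<Sum>n\<in>{1..N} - {m}. F (int m) (int n))"
    by (rule sum.cong[OF refl], rule sum.reindex_bij_witness[where i = int and j = nat]) auto
  finally show ?thesis .
qed

lemma int_sum_conv1: "(\<Sum>m\<in>{1..int N}. F m) = (\<Sum>m\<in>{1..N}. F (int m))"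
  by (rule sum.reindex_bij_witness[where i = int and j = nat]) auto

lemma pair_bound:
  fixes a b s D eps :: real
  assumes "a \<ge> 0" "b \<ge> eps^2 * a" "0 < s" "s \<le> pi^2 * eps^2 * D^2" "D \<noteq> 0"
  shows "a / D^2 \<le> pi^2 * (b / s)"
proof -
  have "a * s \<le> a * (pi^2 * eps^2 * D^2)" using assms by (intro mult_left_mono) auto
  also have "\<dots> = pi^2 * (eps^2 * a) * D^2" by (simp add: algebra_simps)
  also have "\<dots> \<le> pi^2 * b * D^2" using assms by (intro mult_right_mono mult_left_mono) auto
  finally have "a * s \<le> pi^2 * b * D^2" .
  thus ?thesis using assms by (simp add: field_simps)
qed

lemma dir2:
  fixes C3 :: real
  assumes C3: "C3 > 0"
  assumes H: "\<forall>(M::nat) (x::nat \<Rightarrow> real) (\<tau>::nat \<Rightarrow> real).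
            M \<ge> 1 \<longrightarrow>
            (\<forall>m\<in>{1..M}. \<forall>n\<in>{1..M}. m \<noteq> n \<longrightarrow> x m - x n \<notin> \<int>) \<longrightarrow>
            (\<forall>m\<in>{1..M}. \<tau> m \<ge> 0) \<longrightarrow>
            (1/3) * (\<Sum>m\<in>{1..M}. (mindist M x m)^2 * (\<tau> m)^2)
            + (\<Sum>m\<in>{1..M}. \<Sum>n\<in>{1..M} - {m}.
                 mindist M x m powr (3/2) * mindist M x n powr (1/2) * \<tau> m * \<tau> n
                   / (sin (pi * (x m - x n)))^2)
            \<le> C3 / pi^2 * (\<Sum>m\<in>{1..M}. (\<tau> m)^2)"
  shows "\<forall>(N::nat) (lam::int \<Rightarrow> real) (t::int \<Rightarrow> real).
            N \<ge> 1 \<longrightarrow> strict_mono lam \<longrightarrow> (\<forall>n\<in>{1..int N}. t n \<ge> 0) \<longrightarrow>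
            (\<Sum>m\<in>{1..int N}. \<Sum>n\<in>{1..int N} - {m}.
               gapdelta lam m powr (3/2) * gapdelta lam n powr (1/2) * t m * t n
                 / (lam m - lam n)^2)
            \<le> C3 * (\<Sum>n\<in>{1..int N}. (t n)^2)"
proof (intro allI impI)
  fix N :: nat and lam :: "int \<Rightarrow> real" and t :: "int \<Rightarrow> real"
  assume N: "N \<ge> 1" and sm: "strict_mono lam" and tnn: "\<forall>n\<in>{1..int N}. t n \<ge> 0"
  show "(\<Sum>m\<in>{1..int N}. \<Sum>n\<in>{1..int N} - {m}.
               gapdelta lam m powr (3/2) * gapdelta lam n powr (1/2) * t m * t n
                 / (lam m - lam n)^2)
            \<le> C3 * (\<Sum>n\<in>{1..int N}. (t n)^2)"
  proof (cases "N = 1")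
    case True
    thus ?thesis using C3 by simp
  next
    case False
    hence N2: "N \<ge> 2" using N by simp
    define A where "A = lam (int N) - lam 1"
    have A: "A > 0" using N2 sm unfolding A_def by (simp add: strict_mono_less)
    define eps where "eps = 1 / (2 * A)"
    have eps: "eps > 0" using A by (simp add: eps_def)
    define x where "x m = eps * lam (int m)" for m :: nat
    define \<tau> where "\<tau> m = t (int m)" for m :: nat
    have range: "lam 1 \<le> lam (int m) \<and> lam (int m) \<le> lam (int N)" if "m \<in> {1..N}" for m
      using that sm by (auto simp: strict_mono_less_eq)
    have diff_le: "\<bar>x m - x n\<bar> \<le> 1/2" if "m \<in> {1..N}" "n \<in> {1..N}" for m n
    proof -
      have "\<bar>lam (int m) - lam (int n)\<bar> \<le> A" using range[OF that(1)] range[OF that(2)] unfolding A_def by linarith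
      hence "eps * \<bar>lam (int m) - lam (int n)\<bar> \<le> eps * A" using eps by (intro mult_left_mono) auto
      also have "eps * A = 1/2" using A by (simp add: eps_def)
      finally show ?thesis by (simp add: x_def abs_mult abs_of_pos[OF eps] right_diff_distrib[symmetric])
    qed
    have diff_ne: "x m \<noteq> x n" if "m \<noteq> n" for m n
    proof -
      have "lam (int m) \<noteq> lam (int n)" using that sm strict_mono_eq by fastforce
      thus ?thesis using eps by (simp add: x_def)
    qed
    have notint: "x m - x n \<notin> \<int>" if "m \<in> {1..N}" "n \<in> {1..N}" "m \<noteq> n" for m n
      using diff_le[OF that(1,2)] diff_ne[OF that(3)] int_abs_lt1[of "x m - x n"] by auto
    have dn: "dnint (x n - x m) = eps * \<bar>lam (int n) - lam (int m)\<bar>" if "m \<in> {1..N}" "n \<in> {1..N}" for m n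
      using dnint_small[OF diff_le[OF that(2,1)]] eps by (simp add: x_def abs_mult right_diff_distrib[symmetric])
    have md: "mindist N x m \<ge> eps * gapdelta lam (int m)" if m: "m \<in> {1..N}" for m
    proof -
      have eq: "{dnint (x n - x m) | n. n \<in> {1..N} \<and> n \<noteq> m} = (\<lambda>n. dnint (x n - x m)) ` ({1..N} - {m})"
        by auto
      have ne: "{1..N} - {m} \<noteq> {}"
      proof -
        have "(if m = 1 then 2 else 1) \<in> {1..N} - {m}" using N2 by auto
        thus ?thesis by blast
      qed
      have "eps * gapdelta lam (int m) \<le> Min ((\<lambda>n. dnint (x n - x m)) ` ({1..N} - {m}))"
      proof (subst Min_ge_iff)
        show "\<forall>a\<in>(\<lambda>n. dnint (x n - x m)) ` ({1..N} - {m}). eps * gapdelta lam (int m) \<le> a"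
        proof
          fix a assume "a \<in> (\<lambda>n. dnint (x n - x m)) ` ({1..N} - {m})"
          then obtain n where n0: "n \<in> {1..N} - {m}" and a: "a = dnint (x n - x m)" by blast
          hence n: "n \<in> {1..N}" "n \<noteq> m" by auto
          have "gapdelta lam (int m) \<le> \<bar>lam (int n) - lam (int m)\<bar>" using n by (intro gap_le sm) auto
          thus "eps * gapdelta lam (int m) \<le> a" using a dn[OF m n(1)] eps by simp
        qed
      qed (use ne in auto)
      thus ?thesis using N2 eq by (simp add: mindist_def)
    qed
    have tau_nn: "\<forall>m\<in>{1..N}. \<tau> m \<ge> 0" using tnn by (auto simp: \<tau>_def)
    from H[rule_format, of N x \<tau>] N notint tau_nn
    have H': "(1/3) * (\<Sum>m\<in>{1..N}. (mindist N x m)^2 * (\<tau> m)^2)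
            + (\<Sum>m\<in>{1..N}. \<Sum>n\<in>{1..N} - {m}.
                 mindist N x m powr (3/2) * mindist N x n powr (1/2) * \<tau> m * \<tau> n
                   / (sin (pi * (x m - x n)))^2)
            \<le> C3 / pi^2 * (\<Sum>m\<in>{1..N}. (\<tau> m)^2)" by blast
    have first: "(1/3) * (\<Sum>m\<in>{1..N}. (mindist N x m)^2 * (\<tau> m)^2) \<ge> 0"
      by (intro mult_nonneg_nonneg sum_nonneg) auto
    have pt: "gapdelta lam (int m) powr (3/2) * gapdelta lam (int n) powr (1/2) * t (int m) * t (int n)
                 / (lam (int m) - lam (int n))^2
          \<le> pi^2 * (mindist N x m powr (3/2) * mindist N x n powr (1/2) * \<tau> m * \<tau> n
                   / (sin (pi * (x m - x n)))^2)"
      if m: "m \<in> {1..N}" and n: "n \<in> {1..N} - {m}" for m n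
    proof (rule pair_bound[where eps = eps])
      have tm: "t (int m) \<ge> 0" "t (int n) \<ge> 0" using tnn m n by auto
      show "0 \<le> gapdelta lam (int m) powr (3/2) * gapdelta lam (int n) powr (1/2) * t (int m) * t (int n)"
        using tm by auto
      have g1: "(eps * gapdelta lam (int m)) powr (3/2) \<le> mindist N x m powr (3/2)"
        using md[OF m] eps gap_pos[OF sm, of "int m"] by (intro powr_mono2) auto
      have g2: "(eps * gapdelta lam (int n)) powr (1/2) \<le> mindist N x n powr (1/2)"
        using md[of n] n eps gap_pos[OF sm, of "int n"] by (intro powr_mono2) auto
      have "eps^2 * (gapdelta lam (int m) powr (3/2) * gapdelta lam (int n) powr (1/2) * t (int m) * t (int n))
         = (eps * gapdelta lam (int m)) powr (3/2) * (eps * gapdelta lam (int n)) powr (1/2) * \<tau> m * \<tau> n"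
      proof -
        have "eps^2 = eps powr (3/2) * eps powr (1/2)"
          using eps by (simp add: powr_add[symmetric] powr_numeral)
        thus ?thesis using eps gap_pos[OF sm] by (simp add: powr_mult \<tau>_def)
      qed
      also have "\<dots> \<le> mindist N x m powr (3/2) * mindist N x n powr (1/2) * \<tau> m * \<tau> n"
        using g1 g2 tm by (auto simp: \<tau>_def intro!: mult_mono mult_nonneg_nonneg)
      finally show "eps^2 * (gapdelta lam (int m) powr (3/2) * gapdelta lam (int n) powr (1/2) * t (int m) * t (int n))
         \<le> mindist N x m powr (3/2) * mindist N x n powr (1/2) * \<tau> m * \<tau> n" .
      have ne: "x m - x n \<noteq> 0" using diff_ne[of m n] n by auto
      have small: "\<bar>pi * (x m - x n)\<bar> < pi"
        using diff_le[of m n] m n by (simp add: abs_mult)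
      have "sin (pi * (x m - x n)) \<noteq> 0"
      proof
        assume "sin (pi * (x m - x n)) = 0"
        then obtain k :: int where k: "pi * (x m - x n) = of_int k * pi" by (auto simp: sin_zero_iff_int2)
        hence "x m - x n = of_int k" by simp
        thus False using notint[of m n] m n by auto
      qed
      thus "0 < (sin (pi * (x m - x n)))^2" by simp
      have "(sin (pi * (x m - x n)))^2 \<le> (pi * (x m - x n))^2"
        using abs_sin_x_le_abs_x[of "pi * (x m - x n)"] by (metis abs_ge_zero power2_abs power_mono)
      also have "\<dots> = pi^2 * eps^2 * (lam (int m) - lam (int n))^2"
        by (simp add: x_def power2_eq_square algebra_simps)
      finally show "(sin (pi * (x m - x n)))^2 \<le> pi^2 * eps^2 * (lam (int m) - lam (int n))^2" .
      show "lam (int m) - lam (int n) \<noteq> 0" using ne by (auto simp: x_def)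
    qed
    have "(\<Sum>m\<in>{1..int N}. \<Sum>n\<in>{1..int N} - {m}.
               gapdelta lam m powr (3/2) * gapdelta lam n powr (1/2) * t m * t n
                 / (lam m - lam n)^2)
        = (\<Sum>m\<in>{1..N}. \<Sum>n\<in>{1..N} - {m}.
               gapdelta lam (int m) powr (3/2) * gapdelta lam (int n) powr (1/2) * t (int m) * t (int n)
                 / (lam (int m) - lam (int n))^2)"
      by (rule int_sum_conv)
    also have "\<dots> \<le> (\<Sum>m\<in>{1..N}. \<Sum>n\<in>{1..N} - {m}. pi^2 * (mindist N x m powr (3/2) * mindist N x n powr (1/2) * \<tau> m * \<tau> n
                   / (sin (pi * (x m - x n)))^2))"
      by (intro sum_mono pt) auto
    also have "\<dots> = pi^2 * (\<Sum>m\<in>{1..N}. \<Sum>n\<in>{1..N} - {m}. mindist N x m powr (3/2) * mindist N x n powr (1/2) * \<tau> m * \<tau> n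
                   / (sin (pi * (x m - x n)))^2)"
      by (simp add: sum_distrib_left)
    also have "\<dots> \<le> pi^2 * (C3 / pi^2 * (\<Sum>m\<in>{1..N}. (\<tau> m)^2))"
      using H' first by (intro mult_left_mono) auto
    also have "\<dots> = C3 * (\<Sum>n\<in>{1..int N}. (t n)^2)"
      by (simp add: int_sum_conv1 \<tau>_def)
    finally show ?thesis .
  qed
qed



lemma sort_setup:
  fixes y :: "nat \<Rightarrow> real"
  assumes inj: "inj_on y {1..M}"
  obtains e :: "nat \<Rightarrow> real" and \<sigma> :: "nat \<Rightarrow> nat"
  where "bij_betw \<sigma> {..<M} {1..M}" "\<And>r. r < M \<Longrightarrow> y (\<sigma> r) = e r"
        "\<And>r r'. r < r' \<Longrightarrow> r' < M \<Longrightarrow> e r < e r'"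
proof -
  define S where "S = y ` {1..M}"
  define L where "L = sorted_list_of_set S"
  have fS: "finite S" by (simp add: S_def)
  have cS: "card S = M" using inj by (simp add: S_def card_image)
  have len: "length L = M" using cS fS by (simp add: L_def)
  have setL: "set L = S" using fS by (simp add: L_def)
  have dL: "distinct L" by (simp add: L_def)
  have sL: "sorted_wrt (<) L" unfolding L_def by (rule strict_sorted_list_of_set)
  have b1: "bij_betw (nth L) {..<M} S"
    using bij_betw_nth[OF dL] len setL by (metis lessThan_def)
  have b2: "bij_betw (inv_into {1..M} y) S {1..M}"
    using inj by (simp add: S_def bij_betw_inv_into inj_on_imp_bij_betw)
  define \<sigma> where "\<sigma> = inv_into {1..M} y \<circ> nth L"
  have "bij_betw \<sigma> {..<M} {1..M}" unfolding \<sigma>_def by (rule bij_betw_trans[OF b1 b2])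
  moreover have "y (\<sigma> r) = L ! r" if "r < M" for r
  proof -
    have "L ! r \<in> y ` {1..M}" using that len setL by (metis S_def nth_mem)
    thus ?thesis by (simp add: \<sigma>_def f_inv_into_f)
  qed
  moreover have "L ! r < L ! r'" if "r < r'" "r' < M" for r r'
    using sL that len by (simp add: sorted_wrt_iff_nth_less)
  ultimately show ?thesis by (rule that)
qed

lemma decode:
  assumes "r < M"
  shows "nat ((int (q * M + r) + 1 - 1) mod int M) = r" "(int (q * M + r) + 1 - 1) div int M = int q"
proof -
  have "(int (q * M + r) + 1 - 1) mod int M = int ((q * M + r) mod M)" by (simp add: zmod_int)
  thus "nat ((int (q * M + r) + 1 - 1) mod int M) = r" using assms by simp
  have "(int (q * M + r) + 1 - 1) div int M = int ((q * M + r) div M)" by (simp add: zdiv_int)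
  thus "(int (q * M + r) + 1 - 1) div int M = int q" using assms by simp
qed

lemma lam_mono:
  fixes e :: "nat \<Rightarrow> real"
  assumes M: "M \<ge> 1"
    and emono: "\<And>r r'. r < r' \<Longrightarrow> r' < M \<Longrightarrow> e r < e r'"
    and erange: "\<And>r. r < M \<Longrightarrow> 0 \<le> e r \<and> e r < 1"
  shows "strict_mono (\<lambda>i::int. e (nat ((i - 1) mod int M)) + of_int ((i - 1) div int M))"
proof (rule strict_monoI)
  fix i j :: int assume ij: "i < j"
  define a where "a = i - 1"
  define b where "b = j - 1"
  have ab: "a < b" using ij by (simp add: a_def b_def)
  have Mp: "int M > 0" using M by simp
  have ra: "0 \<le> a mod int M" "a mod int M < int M" using Mp by auto
  have rb: "0 \<le> b mod int M" "b mod int M < int M" using Mp by auto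
  have "a div int M \<le> b div int M" using ab Mp by (intro zdiv_mono1) auto
  hence cases: "a div int M < b div int M \<or> a div int M = b div int M" by auto
  have ea: "0 \<le> e (nat (a mod int M)) \<and> e (nat (a mod int M)) < 1" using ra by (intro erange) linarith
  have eb: "0 \<le> e (nat (b mod int M)) \<and> e (nat (b mod int M)) < 1" using rb by (intro erange) linarith
  have "e (nat (a mod int M)) + of_int (a div int M) < e (nat (b mod int M)) + of_int (b div int M)"
  proof (cases "a div int M < b div int M")
    case True
    hence "real_of_int (a div int M) + 1 \<le> real_of_int (b div int M)" by linarith
    thus ?thesis using ea eb by linarith
  next
    case False
    hence eq: "a div int M = b div int M" using cases by auto
    have "a div int M * int M + a mod int M < b div int M * int M + b mod int M" using ab by simp
    hence "a mod int M < b mod int M" unfolding eq by (simp only: add_less_cancel_left)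
    hence "e (nat (a mod int M)) < e (nat (b mod int M))" using ra rb by (intro emono) linarith+
    thus ?thesis using eq by simp
  qed
  thus "e (nat ((i - 1) mod int M)) + of_int ((i - 1) div int M) < e (nat ((j - 1) mod int M)) + of_int ((j - 1) div int M)"
    by (simp add: a_def b_def)
qed



lemma sin_sq_shift: "(sin (pi * (z - of_int k)))^2 = (sin (pi * z))^2"
  by (simp add: right_diff_distrib sin_diff)

lemma powr_32_12: "(d::real) \<ge> 0 \<Longrightarrow> d powr (3/2) * d powr (1/2) = d^2"
proof (cases "d = 0")
  case False
  assume "d \<ge> 0"
  hence "d > 0" using False by simp
  have "d powr (3/2) * d powr (1/2) = d powr 2" by (simp add: powr_add[symmetric])
  also have "\<dots> = d^2" using \<open>d > 0\<close> by (simp add: powr_numeral)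
  finally show ?thesis .
qed simp

lemma swap4:
  "(\<Sum>q\<in>A. \<Sum>r\<in>B. \<Sum>q'\<in>A. \<Sum>r'\<in>B. f q r q' r') = (\<Sum>r\<in>B. \<Sum>r'\<in>B. \<Sum>q\<in>A. \<Sum>q'\<in>A. f q r q' r')"
proof -
  have "(\<Sum>q\<in>A. \<Sum>r\<in>B. \<Sum>q'\<in>A. \<Sum>r'\<in>B. f q r q' r') = (\<Sum>r\<in>B. \<Sum>q\<in>A. \<Sum>q'\<in>A. \<Sum>r'\<in>B. f q r q' r')"
    by (rule sum.swap)
  also have "\<dots> = (\<Sum>r\<in>B. \<Sum>q\<in>A. \<Sum>r'\<in>B. \<Sum>q'\<in>A. f q r q' r')"
    by (intro sum.cong refl sum.swap)
  also have "\<dots> = (\<Sum>r\<in>B. \<Sum>r'\<in>B. \<Sum>q\<in>A. \<Sum>q'\<in>A. f q r q' r')"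
    by (intro sum.cong refl sum.swap)
  finally show ?thesis .
qed

lemma dir1:
  fixes C3 :: real
  assumes C3: "C3 > 0"
  assumes H: "\<forall>(N::nat) (lam::int \<Rightarrow> real) (t::int \<Rightarrow> real).
            N \<ge> 1 \<longrightarrow> strict_mono lam \<longrightarrow> (\<forall>n\<in>{1..int N}. t n \<ge> 0) \<longrightarrow>
            (\<Sum>m\<in>{1..int N}. \<Sum>n\<in>{1..int N} - {m}.
               gapdelta lam m powr (3/2) * gapdelta lam n powr (1/2) * t m * t n
                 / (lam m - lam n)^2)
            \<le> C3 * (\<Sum>n\<in>{1..int N}. (t n)^2)"
  shows "\<forall>(M::nat) (x::nat \<Rightarrow> real) (\<tau>::nat \<Rightarrow> real).
            M \<ge> 1 \<longrightarrow>
            (\<forall>m\<in>{1..M}. \<forall>n\<in>{1..M}. m \<noteq> n \<longrightarrow> x m - x n \<notin> \<int>) \<longrightarrow>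
            (\<forall>m\<in>{1..M}. \<tau> m \<ge> 0) \<longrightarrow>
            (1/3) * (\<Sum>m\<in>{1..M}. (mindist M x m)^2 * (\<tau> m)^2)
            + (\<Sum>m\<in>{1..M}. \<Sum>n\<in>{1..M} - {m}.
                 mindist M x m powr (3/2) * mindist M x n powr (1/2) * \<tau> m * \<tau> n
                   / (sin (pi * (x m - x n)))^2)
            \<le> C3 / pi^2 * (\<Sum>m\<in>{1..M}. (\<tau> m)^2)"
proof (intro allI impI)
  fix M :: nat and x :: "nat \<Rightarrow> real" and \<tau> :: "nat \<Rightarrow> real"
  assume M: "M \<ge> 1" and dist: "\<forall>m\<in>{1..M}. \<forall>n\<in>{1..M}. m \<noteq> n \<longrightarrow> x m - x n \<notin> \<int>"
     and tnn: "\<forall>m\<in>{1..M}. \<tau> m \<ge> 0"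
  define y where "y m = frac (x m)" for m
  have yx: "y m - y n = (x m - x n) - of_int (\<lfloor>x m\<rfloor> - \<lfloor>x n\<rfloor>)" for m n
    by (simp add: y_def frac_def)
  have inj: "inj_on y {1..M}"
  proof (rule inj_onI)
    fix m n assume mn: "m \<in> {1..M}" "n \<in> {1..M}" "y m = y n"
    hence "x m - x n = of_int (\<lfloor>x m\<rfloor> - \<lfloor>x n\<rfloor>)" using yx[of m n] by simp
    hence "x m - x n \<in> \<int>" by simp
    thus "m = n" using dist mn by blast
  qed
  obtain e \<sigma> where bij: "bij_betw \<sigma> {..<M} {1..M}" and ye: "\<And>r. r < M \<Longrightarrow> y (\<sigma> r) = e r"
     and emono: "\<And>r r'. r < r' \<Longrightarrow> r' < M \<Longrightarrow> e r < e r'"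
    by (rule sort_setup[OF inj]) blast
  have \<sigma>in: "\<sigma> r \<in> {1..M}" if "r < M" for r using bij that by (auto simp: bij_betw_def)
  have \<sigma>inj: "\<sigma> r \<noteq> \<sigma> r'" if "r < M" "r' < M" "r \<noteq> r'" for r r'
    using bij that by (auto simp: bij_betw_def inj_on_def)
  have erange: "0 \<le> e r \<and> e r < 1" if "r < M" for r
    using ye[OF that] frac_lt_1[of "x (\<sigma> r)"] frac_ge_0[of "x (\<sigma> r)"] by (simp add: y_def)
  define lam where "lam i = e (nat ((i - 1) mod int M)) + of_int ((i - 1) div int M)" for i :: int
  define ri where "ri i = nat ((i - 1) mod int M)" for i :: int
  define qi where "qi i = (i - 1) div int M" for i :: int
  define t where "t i = \<tau> (\<sigma> (ri i))" for i :: int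
  have sm: "strict_mono lam" unfolding lam_def by (rule lam_mono[OF M emono erange])
  have ri_lt: "ri i < M" for i
  proof -
    have "0 \<le> (i - 1) mod int M" "(i - 1) mod int M < int M" using M by auto
    thus ?thesis unfolding ri_def by linarith
  qed
  have i_dec: "i - 1 = qi i * int M + int (ri i)" for i
  proof -
    have "0 \<le> (i - 1) mod int M" using M by auto
    thus ?thesis unfolding ri_def qi_def by simp
  qed
  have lam_eq: "lam i = e (ri i) + of_int (qi i)" for i by (simp add: lam_def ri_def qi_def)
  have tnn': "t i \<ge> 0" for i using tnn \<sigma>in[OF ri_lt[of i]] by (simp add: t_def)
  define d where "d m = mindist M x m" for m
  have dfin: "finite {dnint (x n - x m) | n. n \<in> {1..M} \<and> n \<noteq> m}" for m
  proof -
    have "{dnint (x n - x m) | n. n \<in> {1..M} \<and> n \<noteq> m} = (\<lambda>n. dnint (x n - x m)) ` ({1..M} - {m})" by auto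
    thus ?thesis by simp
  qed
  have d01: "0 \<le> d m \<and> d m \<le> 1" if m: "m \<in> {1..M}" for m
  proof (cases "M = 1")
    case True thus ?thesis by (simp add: d_def mindist_def)
  next
    case False
    have ne: "{dnint (x n - x m) | n. n \<in> {1..M} \<and> n \<noteq> m} \<noteq> {}"
    proof -
      have "(if m = 1 then 2 else 1) \<in> {1..M}" "(if m = 1 then 2 else 1) \<noteq> m" using M False m by auto
      thus ?thesis by blast
    qed
    from Min_in[OF dfin ne] obtain n where "Min {dnint (x n - x m) | n. n \<in> {1..M} \<and> n \<noteq> m} = dnint (x n - x m)"
      by blast
    thus ?thesis using False dnint_nonneg dnint_le1 by (simp add: d_def mindist_def)
  qed
  have dle: "d m \<le> dnint (x n - x m)" if "m \<in> {1..M}" "n \<in> {1..M}" "n \<noteq> m" for m n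
  proof -
    have "M \<noteq> 1" using that by auto
    moreover have "dnint (x n - x m) \<in> {dnint (x n - x m) | n. n \<in> {1..M} \<and> n \<noteq> m}" using that by blast
    ultimately show ?thesis by (simp add: d_def mindist_def Min_le[OF dfin])
  qed
  have claim: "d (\<sigma> (ri i)) \<le> \<bar>lam i - lam i'\<bar>" if "i' \<noteq> i" for i i'
  proof (cases "ri i = ri i'")
    case True
    have "qi i \<noteq> qi i'"
    proof
      assume "qi i = qi i'"
      hence "i - 1 = i' - 1" using True i_dec[of i] i_dec[of i'] by simp
      thus False using that by simp
    qed
    hence "1 \<le> \<bar>qi i - qi i'\<bar>" by linarith
    hence "1 \<le> \<bar>real_of_int (qi i) - real_of_int (qi i')\<bar>" by (metis of_int_1_le_iff of_int_abs of_int_diff)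
    moreover have "lam i - lam i' = real_of_int (qi i) - real_of_int (qi i')" using True by (simp add: lam_eq)
    ultimately show ?thesis using d01[OF \<sigma>in[OF ri_lt[of i]]] by linarith
  next
    case False
    define m where "m = \<sigma> (ri i)"
    define n where "n = \<sigma> (ri i')"
    have mn: "m \<in> {1..M}" "n \<in> {1..M}" "n \<noteq> m"
      using \<sigma>in[OF ri_lt] \<sigma>inj[OF ri_lt ri_lt False] by (auto simp: m_def n_def)
    have "lam i - lam i' = y m - y n + of_int (qi i) - of_int (qi i')"
      using ye[OF ri_lt[of i]] ye[OF ri_lt[of i']] by (simp add: lam_eq m_def n_def)
    also have "\<dots> = - ((x n - x m) - of_int (\<lfloor>x n\<rfloor> - \<lfloor>x m\<rfloor> + qi i - qi i'))"
      by (simp add: y_def frac_def)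
    finally have "\<bar>lam i - lam i'\<bar> = \<bar>(x n - x m) - of_int (\<lfloor>x n\<rfloor> - \<lfloor>x m\<rfloor> + qi i - qi i')\<bar>" by simp
    moreover have "dnint (x n - x m) \<le> \<bar>(x n - x m) - of_int (\<lfloor>x n\<rfloor> - \<lfloor>x m\<rfloor> + qi i - qi i')\<bar>"
      by (rule dnint_le)
    ultimately show ?thesis using dle[OF mn(1,2,3)] by (simp add: m_def)
  qed
  have gapd: "d (\<sigma> (ri i)) \<le> gapdelta lam i" for i
  proof -
    have "d (\<sigma> (ri i)) \<le> \<bar>lam i - lam (i - 1)\<bar>" "d (\<sigma> (ri i)) \<le> \<bar>lam i - lam (i + 1)\<bar>"
      by (intro claim; simp)+
    moreover have "lam (i - 1) < lam i" "lam i < lam (i + 1)" using sm by (auto simp: strict_mono_less)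
    ultimately show ?thesis unfolding gapdelta_def by auto
  qed
  have dnn: "d (\<sigma> (ri i)) \<ge> 0" for i using d01[OF \<sigma>in[OF ri_lt[of i]]] by simp
  define c where "c m n = d m powr (3/2) * d n powr (1/2) * \<tau> m * \<tau> n" for m n
  define T where "T = (\<Sum>m\<in>{1..M}. (\<tau> m)^2)"
  define W where "W J = (\<Sum>m\<in>{1..M}. \<Sum>n\<in>{1..M}. c m n * PJ J (y m - y n))" for J
  have key: "real (K - 2 * J) * W J \<le> C3 * (real K * T)" if K1: "K \<ge> 1" and JK: "2 * J \<le> K" for J K
  proof -
    define N where "N = K * M"
    have N1: "N \<ge> 1" using K1 M by (simp add: N_def)
    have H1: "(\<Sum>i\<in>{1..int N}. \<Sum>i'\<in>{1..int N} - {i}.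
               gapdelta lam i powr (3/2) * gapdelta lam i' powr (1/2) * t i * t i'
                 / (lam i - lam i')^2)
            \<le> C3 * (\<Sum>i\<in>{1..int N}. (t i)^2)"
      using H[rule_format, of N lam t] N1 sm tnn' by blast
    define G where "G i i' = d (\<sigma> (ri i)) powr (3/2) * d (\<sigma> (ri i')) powr (1/2) * t i * t i' / (lam i - lam i')^2" for i i'
    define C where "C r r' = c (\<sigma> r) (\<sigma> r')" for r r'
    define gg where "gg u j = 1 / (u + of_int j)^2" for u :: real and j :: int
    have ggnn: "gg u j \<ge> 0" for u j by (simp add: gg_def)
    have Cnn: "C r r' \<ge> 0" if "r < M" "r' < M" for r r'
      using tnn \<sigma>in[OF that(1)] \<sigma>in[OF that(2)] d01[OF \<sigma>in[OF that(1)]] d01[OF \<sigma>in[OF that(2)]]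
      by (auto simp: C_def c_def)
    have step1: "(\<Sum>i\<in>{1..int N}. \<Sum>i'\<in>{1..int N} - {i}.
               gapdelta lam i powr (3/2) * gapdelta lam i' powr (1/2) * t i * t i'
                 / (lam i - lam i')^2)
        = (\<Sum>i\<in>{1..int N}. \<Sum>i'\<in>{1..int N}.
               gapdelta lam i powr (3/2) * gapdelta lam i' powr (1/2) * t i * t i'
                 / (lam i - lam i')^2)"
    proof (rule sum.cong[OF refl])
      fix i assume "i \<in> {1..int N}"
      from sum.remove[OF _ this, of "\<lambda>i'. gapdelta lam i powr (3/2) * gapdelta lam i' powr (1/2) * t i * t i'
                 / (lam i - lam i')^2"]
      show "(\<Sum>i'\<in>{1..int N} - {i}. gapdelta lam i powr (3/2) * gapdelta lam i' powr (1/2) * t i * t i'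
                 / (lam i - lam i')^2) = (\<Sum>i'\<in>{1..int N}. gapdelta lam i powr (3/2) * gapdelta lam i' powr (1/2) * t i * t i'
                 / (lam i - lam i')^2)" by simp
    qed
    have step2: "(\<Sum>i\<in>{1..int N}. \<Sum>i'\<in>{1..int N}. G i i') \<le> (\<Sum>i\<in>{1..int N}. \<Sum>i'\<in>{1..int N}.
               gapdelta lam i powr (3/2) * gapdelta lam i' powr (1/2) * t i * t i'
                 / (lam i - lam i')^2)"
    proof (intro sum_mono)
      fix i i'
      have a: "d (\<sigma> (ri i)) powr (3/2) \<le> gapdelta lam i powr (3/2)"
        using dnn[of i] gapd[of i] by (intro powr_mono2) auto
      have b: "d (\<sigma> (ri i')) powr (1/2) \<le> gapdelta lam i' powr (1/2)"
        using dnn[of i'] gapd[of i'] by (intro powr_mono2) auto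
      have "d (\<sigma> (ri i)) powr (3/2) * d (\<sigma> (ri i')) powr (1/2) * t i * t i'
         \<le> gapdelta lam i powr (3/2) * gapdelta lam i' powr (1/2) * t i * t i'"
        using a b tnn'[of i] tnn'[of i'] by (intro mult_mono mult_nonneg_nonneg) auto
      thus "G i i' \<le> gapdelta lam i powr (3/2) * gapdelta lam i' powr (1/2) * t i * t i' / (lam i - lam i')^2"
        unfolding G_def by (intro divide_right_mono) auto
    qed
    have Gphi: "G (int (q * M + r) + 1) (int (q' * M + r') + 1) = C r r' * gg (e r - e r') (int q - int q')"
      if "r < M" "r' < M" for q r q' r'
    proof -
      have r1: "ri (int (q * M + r) + 1) = r" "qi (int (q * M + r) + 1) = int q"
        using decode[OF that(1), of q] by (simp_all add: ri_def qi_def)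
      have r2: "ri (int (q' * M + r') + 1) = r'" "qi (int (q' * M + r') + 1) = int q'"
        using decode[OF that(2), of q'] by (simp_all add: ri_def qi_def)
      have t1: "t (int (q * M + r) + 1) = \<tau> (\<sigma> r)" "t (int (q' * M + r') + 1) = \<tau> (\<sigma> r')"
        using r1 r2 by (simp_all add: t_def)
      have l1: "lam (int (q * M + r) + 1) = e r + real q" "lam (int (q' * M + r') + 1) = e r' + real q'"
        using r1 r2 by (simp_all add: lam_eq)
      show ?thesis unfolding G_def t1 l1 r1 r2 C_def c_def gg_def
        by (simp add: algebra_simps)
    qed
    have step3: "(\<Sum>i\<in>{1..int N}. \<Sum>i'\<in>{1..int N}. G i i')
       = (\<Sum>r<M. \<Sum>r'<M. C r r' * (\<Sum>q<K. \<Sum>q'<K. gg (e r - e r') (int q - int q')))"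
    proof -
      have "(\<Sum>i\<in>{1..int N}. \<Sum>i'\<in>{1..int N}. G i i')
         = (\<Sum>q<K. \<Sum>r<M. \<Sum>q'<K. \<Sum>r'<M. G (int (q * M + r) + 1) (int (q' * M + r') + 1))"
        unfolding N_def reidx by simp
      also have "\<dots> = (\<Sum>q<K. \<Sum>r<M. \<Sum>q'<K. \<Sum>r'<M. C r r' * gg (e r - e r') (int q - int q'))"
        by (intro sum.cong refl Gphi) auto
      also have "\<dots> = (\<Sum>r<M. \<Sum>r'<M. \<Sum>q<K. \<Sum>q'<K. C r r' * gg (e r - e r') (int q - int q'))"
        by (rule swap4)
      also have "\<dots> = (\<Sum>r<M. \<Sum>r'<M. C r r' * (\<Sum>q<K. \<Sum>q'<K. gg (e r - e r') (int q - int q')))"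
        by (simp add: sum_distrib_left)
      finally show ?thesis .
    qed
    have step4: "(\<Sum>r<M. \<Sum>r'<M. C r r' * (real (K - 2 * J) * PJ J (e r - e r')))
        \<le> (\<Sum>r<M. \<Sum>r'<M. C r r' * (\<Sum>q<K. \<Sum>q'<K. gg (e r - e r') (int q - int q')))"
    proof (intro sum_mono mult_left_mono)
      fix r r' assume "r \<in> {..<M}" "r' \<in> {..<M}"
      thus "0 \<le> C r r'" using Cnn by auto
      show "real (K - 2 * J) * PJ J (e r - e r') \<le> (\<Sum>q<K. \<Sum>q'<K. gg (e r - e r') (int q - int q'))"
        unfolding PJ_def using double_sum_lb[of "gg (e r - e r')", OF ggnn JK] by (simp add: gg_def)
    qed
    have step5: "(\<Sum>r<M. \<Sum>r'<M. C r r' * (real (K - 2 * J) * PJ J (e r - e r'))) = real (K - 2 * J) * W J"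
    proof -
      have "W J = (\<Sum>r<M. \<Sum>n\<in>{1..M}. c (\<sigma> r) n * PJ J (y (\<sigma> r) - y n))"
        unfolding W_def by (rule sum.reindex_bij_betw[OF bij, symmetric])
      also have "\<dots> = (\<Sum>r<M. \<Sum>r'<M. c (\<sigma> r) (\<sigma> r') * PJ J (y (\<sigma> r) - y (\<sigma> r')))"
        by (intro sum.cong refl sum.reindex_bij_betw[OF bij, symmetric])
      also have "\<dots> = (\<Sum>r<M. \<Sum>r'<M. C r r' * PJ J (e r - e r'))"
        by (intro sum.cong refl) (simp add: ye C_def)
      finally show ?thesis by (simp add: sum_distrib_left algebra_simps)
    qed
    have step6: "(\<Sum>i\<in>{1..int N}. (t i)^2) = real K * T"
    proof -
      have "(\<Sum>i\<in>{1..int N}. (t i)^2) = (\<Sum>q<K. \<Sum>r<M. (t (int (q * M + r) + 1))^2)"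
        unfolding N_def by (rule reidx)
      also have "\<dots> = (\<Sum>q<K. \<Sum>r<M. (\<tau> (\<sigma> r))^2)"
      proof (intro sum.cong refl)
        fix q r assume "r \<in> {..<M}"
        thus "(t (int (q * M + r) + 1))^2 = (\<tau> (\<sigma> r))^2"
          using decode(1)[of r M q] by (simp add: t_def ri_def)
      qed
      also have "\<dots> = real K * (\<Sum>r<M. (\<tau> (\<sigma> r))^2)" by simp
      also have "(\<Sum>r<M. (\<tau> (\<sigma> r))^2) = T"
        unfolding T_def by (rule sum.reindex_bij_betw[OF bij])
      finally show ?thesis .
    qed
    have "real (K - 2 * J) * W J \<le> C3 * (\<Sum>i\<in>{1..int N}. (t i)^2)"
      using H1 step1 step2 step3 step4 step5 by linarith
    thus ?thesis using step6 by simp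
  qed
  have WJ: "W J \<le> C3 * T" for J
  proof -
    have "(\<lambda>K. 2 * real J / real K) \<longlonglongrightarrow> 0" by (rule lim_const_over_n)
    hence lim: "(\<lambda>K. (1 - 2 * real J / real K) * W J) \<longlonglongrightarrow> (1 - 0) * W J"
      by (intro tendsto_intros)
    have "(1 - 2 * real J / real K) * W J \<le> C3 * T" if K: "K \<ge> 2 * J + 1" for K
    proof -
      have Kp: "real K > 0" using K by simp
      have "real (K - 2 * J) * W J \<le> C3 * (real K * T)" using K by (intro key) auto
      moreover have "real (K - 2 * J) = real K - 2 * real J" using K by (simp add: of_nat_diff)
      ultimately have "(real K - 2 * real J) * W J \<le> C3 * (real K * T)" by simp
      hence "(real K - 2 * real J) * W J \<le> (C3 * T) * real K" by (simp only: mult_ac)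
      hence "(real K - 2 * real J) * W J / real K \<le> C3 * T" by (simp only: pos_divide_le_eq[OF Kp])
      also have "(real K - 2 * real J) * W J / real K = ((real K - 2 * real J) / real K) * W J"
        by (simp only: times_divide_eq_left)
      also have "(real K - 2 * real J) / real K = 1 - 2 * real J / real K"
        using Kp by (simp add: diff_divide_distrib)
      finally show ?thesis .
    qed
    hence "\<exists>N0. \<forall>K\<ge>N0. (1 - 2 * real J / real K) * W J \<le> C3 * T" by blast
    from LIMSEQ_le_const2[OF lim this] show ?thesis by simp
  qed
  have pi2: "pi^2 > (0::real)" by simp
  have yr: "0 \<le> y m \<and> y m < 1" for m by (simp add: y_def frac_lt_1)
  have Wlim: "W \<longlonglongrightarrow> (\<Sum>m\<in>{1..M}. \<Sum>n\<in>{1..M}. c m n * Lval (y m - y n))"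
    unfolding W_def
  proof (intro tendsto_sum tendsto_mult_left PJ_lim)
    fix m n show "\<bar>y m - y n\<bar> < 1" using yr[of m] yr[of n] by linarith
  qed
  have Winf: "(\<Sum>m\<in>{1..M}. \<Sum>n\<in>{1..M}. c m n * Lval (y m - y n)) \<le> C3 * T"
    by (rule LIMSEQ_le_const2[OF Wlim]) (use WJ in auto)
  have row: "(\<Sum>n\<in>{1..M}. c m n * Lval (y m - y n))
     = pi^2 * ((1/3) * ((d m)^2 * (\<tau> m)^2) + (\<Sum>n\<in>{1..M} - {m}. c m n / (sin (pi * (x m - x n)))^2))"
    if m: "m \<in> {1..M}" for m
  proof -
    have "(\<Sum>n\<in>{1..M}. c m n * Lval (y m - y n)) = c m m * Lval (y m - y m) + (\<Sum>n\<in>{1..M} - {m}. c m n * Lval (y m - y n))"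
      using sum.remove[of "{1..M}" m "\<lambda>n. c m n * Lval (y m - y n)"] m by simp
    also have "c m m * Lval (y m - y m) = pi^2 * ((1/3) * ((d m)^2 * (\<tau> m)^2))"
    proof -
      have "c m m = (d m powr (3/2) * d m powr (1/2)) * (\<tau> m * \<tau> m)"
        unfolding c_def by (simp only: mult.assoc)
      also have "\<dots> = (d m)^2 * (\<tau> m)^2"
        using powr_32_12[of "d m"] d01[OF m] by (simp add: power2_eq_square)
      finally have cmm: "c m m = (d m)^2 * (\<tau> m)^2" .
      have L0: "Lval (y m - y m) = pi^2 / 3" by (simp add: Lval_def)
      show ?thesis unfolding L0 cmm by simp
    qed
    also have "(\<Sum>n\<in>{1..M} - {m}. c m n * Lval (y m - y n)) = pi^2 * (\<Sum>n\<in>{1..M} - {m}. c m n / (sin (pi * (x m - x n)))^2)"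
      unfolding sum_distrib_left
    proof (rule sum.cong[OF refl])
      fix n assume n: "n \<in> {1..M} - {m}"
      hence n': "n \<in> {1..M}" "n \<noteq> m" by auto
      have "y m \<noteq> y n"
      proof
        assume "y m = y n"
        from inj_onD[OF inj this m n'(1)] n'(2) show False by simp
      qed
      hence "Lval (y m - y n) = pi^2 / (sin (pi * (y m - y n)))^2"
        by (simp add: Lval_def)
      also have "(sin (pi * (y m - y n)))^2 = (sin (pi * (x m - x n)))^2"
        unfolding yx by (rule sin_sq_shift)
      finally have "Lval (y m - y n) = pi^2 / (sin (pi * (x m - x n)))^2" .
      thus "c m n * Lval (y m - y n) = pi^2 * (c m n / (sin (pi * (x m - x n)))^2)" by simp
    qed
    finally show ?thesis by (simp only: distrib_left)
  qed
  have "(\<Sum>m\<in>{1..M}. \<Sum>n\<in>{1..M}. c m n * Lval (y m - y n))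
      = pi^2 * ((1/3) * (\<Sum>m\<in>{1..M}. (d m)^2 * (\<tau> m)^2) + (\<Sum>m\<in>{1..M}. \<Sum>n\<in>{1..M} - {m}. c m n / (sin (pi * (x m - x n)))^2))"
  proof -
    have "(\<Sum>m\<in>{1..M}. \<Sum>n\<in>{1..M}. c m n * Lval (y m - y n))
       = (\<Sum>m\<in>{1..M}. pi^2 * ((1/3) * ((d m)^2 * (\<tau> m)^2) + (\<Sum>n\<in>{1..M} - {m}. c m n / (sin (pi * (x m - x n)))^2)))"
      by (rule sum.cong[OF refl]) (rule row)
    also have "\<dots> = pi^2 * ((1/3) * (\<Sum>m\<in>{1..M}. (d m)^2 * (\<tau> m)^2) + (\<Sum>m\<in>{1..M}. \<Sum>n\<in>{1..M} - {m}. c m n / (sin (pi * (x m - x n)))^2))"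
      by (simp only: sum_distrib_left[symmetric] sum.distrib)
    finally show ?thesis .
  qed
  hence "pi^2 * ((1/3) * (\<Sum>m\<in>{1..M}. (d m)^2 * (\<tau> m)^2) + (\<Sum>m\<in>{1..M}. \<Sum>n\<in>{1..M} - {m}. c m n / (sin (pi * (x m - x n)))^2)) \<le> C3 * T"
    using Winf by linarith
  hence "((1/3) * (\<Sum>m\<in>{1..M}. (d m)^2 * (\<tau> m)^2) + (\<Sum>m\<in>{1..M}. \<Sum>n\<in>{1..M} - {m}. c m n / (sin (pi * (x m - x n)))^2)) * pi^2 \<le> C3 * T"
    by (simp only: mult.commute)
  hence "(1/3) * (\<Sum>m\<in>{1..M}. (d m)^2 * (\<tau> m)^2) + (\<Sum>m\<in>{1..M}. \<Sum>n\<in>{1..M} - {m}. c m n / (sin (pi * (x m - x n)))^2) \<le> (C3 * T) / pi^2"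
    by (simp only: pos_le_divide_eq[OF pi2])
  hence "(1/3) * (\<Sum>m\<in>{1..M}. (d m)^2 * (\<tau> m)^2) + (\<Sum>m\<in>{1..M}. \<Sum>n\<in>{1..M} - {m}. c m n / (sin (pi * (x m - x n)))^2) \<le> C3 / pi^2 * T"
    by (simp only: times_divide_eq_left)
  thus "(1/3) * (\<Sum>m\<in>{1..M}. (mindist M x m)^2 * (\<tau> m)^2)
            + (\<Sum>m\<in>{1..M}. \<Sum>n\<in>{1..M} - {m}.
                 mindist M x m powr (3/2) * mindist M x n powr (1/2) * \<tau> m * \<tau> n
                   / (sin (pi * (x m - x n)))^2)
            \<le> C3 / pi^2 * (\<Sum>m\<in>{1..M}. (\<tau> m)^2)"
    by (simp only: d_def c_def T_def)
qed


theorem lemma7: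
  fixes C3 :: real
  assumes "C3 > 0"
  shows "(\<forall>(N::nat) (lam::int \<Rightarrow> real) (t::int \<Rightarrow> real).
            N \<ge> 1 \<longrightarrow> strict_mono lam \<longrightarrow> (\<forall>n\<in>{1..int N}. t n \<ge> 0) \<longrightarrow>
            (\<Sum>m\<in>{1..int N}. \<Sum>n\<in>{1..int N} - {m}.
               gapdelta lam m powr (3/2) * gapdelta lam n powr (1/2) * t m * t n
                 / (lam m - lam n)^2)
            \<le> C3 * (\<Sum>n\<in>{1..int N}. (t n)^2))
     \<longleftrightarrow>
     (\<forall>(M::nat) (x::nat \<Rightarrow> real) (\<tau>::nat \<Rightarrow> real).
            M \<ge> 1 \<longrightarrow>
            (\<forall>m\<in>{1..M}. \<forall>n\<in>{1..M}. m \<noteq> n \<longrightarrow> x m - x n \<notin> \<int>) \<longrightarrow>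
            (\<forall>m\<in>{1..M}. \<tau> m \<ge> 0) \<longrightarrow>
            (1/3) * (\<Sum>m\<in>{1..M}. (mindist M x m)^2 * (\<tau> m)^2)
            + (\<Sum>m\<in>{1..M}. \<Sum>n\<in>{1..M} - {m}.
                 mindist M x m powr (3/2) * mindist M x n powr (1/2) * \<tau> m * \<tau> n
                   / (sin (pi * (x m - x n)))^2)
            \<le> C3 / pi^2 * (\<Sum>m\<in>{1..M}. (\<tau> m)^2))"
  using dir1[OF assms] dir2[OF assms] by blast

end
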